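(* Let $n\ge 1$, $1\le d\le n$, and let $\mathcal{A}\subseteq\{0,1\}^n$ be nonempty. Then \[ A(n,d;\mathcal{A})\le \big(\mathrm{OPT}(\mathsf{Del}(n,d;\mathcal{A}))\big)^{1/2}. \]
   Context: Fourier transform: $\widehat{f}(\mathbf{s})=2^{-n}\sum_{\mathbf{x}\in\{0,1\}^n}f(\mathbf{x})(-1)^{\mathbf{x}\cdot\mathbf{s}}$. Convolution: $(f\star g)(\mathbf{x})=2^{-n}\sum_{\mathbf{z}\in\{0,1\}^n}f(\mathbf{z})g(\mathbf{x}+\mathbf{z})$, with addition over $\mathbb{F}_2^n$. $w(\mathbf{x})$ is the Hamming weight, $d(\cdot,\cdot)$ the Hamming distance; the minimum distance of a code (nonempty subset of $\{0,1\}^n$) is the minimum distance between distinct codewords (taken as $+\infty$ for a single codeword). $A(n,d;\mathcal{A})$ is the maximum of $|\mathcal{C}|$ over codes $\mathcal{C}\subseteq\mathcal{A}$ of minimum distance at least $d$. For an LP $\mathsf{L}$, $\mathrm{OPT}(\mathsf{L})$ is its optimal value. $\mathsf{Del}(n,d)$ is the LP: maximize $\sum_{\mathbf{x}}f(\mathbf{x})$ over $f:\{0,1\}^n\to\mathbb{R}$ subject to (C1) $f(\mathbf{x})\ge0$ for all $\mathbf{x}$; (C2) $\widehat f(\mathbf{s})\ge0$ for all $\mathbf{s}$; (C3) $f(\mathbf{x})=0$ whenever $1\le w(\mathbf{x})\le d-1$; (C4) $f(0^n)=1$. $\mathsf{Del}(n,d;\mathcal{A})$ is the LP: maximize $\sum_{\mathbf{x}}f(\mathbf{x})$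 over $f:\{0,1\}^n\to\mathbb{R}$ subject to (D1) $f(\mathbf{x})\ge 0$ for all $\mathbf{x}$; (D2) $\widehat f(\mathbf{s})\ge0$ for all $\mathbf{s}$; (D3) $f(\mathbf{x})=0$ whenever $1\le w(\mathbf{x})\le d-1$; (D4) $f(0^n)\le\mathrm{OPT}(\mathsf{Del}(n,d))$; (D5) $f(\mathbf{x})\le 2^n(\mathds{1}_{\mathcal{A}}\star\mathds{1}_{\mathcal{A}})(\mathbf{x})=\sum_{\mathbf{z}}\mathds{1}_{\mathcal{A}}(\mathbf{z})\mathds{1}_{\mathcal{A}}(\mathbf{x}+\mathbf{z})$ for all $\mathbf{x}$. *)

theory Defs
  imports Complex_Main "HOL-Library.Indicator_Function"
begin

text \<open>Binary vectors in {0,1}^n are represented by their supports: subsets of {..<n}.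
  Addition over F_2^n is symmetric difference, x.s is card (x \<inter> s) (mod 2 via (-1)^_),
  Hamming weight is card, Hamming distance is card of the symmetric difference.\<close>

definition cube :: "nat \<Rightarrow> nat set set" where
  "cube n = Pow {..<n}"

definition vadd :: "nat set \<Rightarrow> nat set \<Rightarrow> nat set" where
  "vadd x y = (x - y) \<union> (y - x)"

definition weight :: "nat set \<Rightarrow> nat" where
  "weight x = card x"

definition hdist :: "nat set \<Rightarrow> nat set \<Rightarrow> nat" where
  "hdist x y = weight (vadd x y)"

definition fourier :: "nat \<Rightarrow> (nat set \<Rightarrow> real) \<Rightarrow> nat set \<Rightarrow> real" where
  "fourier n f s = (1 / 2 ^ n) * (\<Sum>x\<in>cube n. f x * (-1) ^ card (x \<inter> s))"

definition conv :: "nat \<Rightarrow> (nat set \<Rightarrow> real) \<Rightarrow> (nat set \<Rightarrow> real) \<Rightarrow> nat set \<Rightarrow> real" where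
  "conv n f g x = (1 / 2 ^ n) * (\<Sum>z\<in>cube n. f z * g (vadd x z))"

definition is_code_in :: "nat \<Rightarrow> nat \<Rightarrow> nat set set \<Rightarrow> nat set set \<Rightarrow> bool" where
  "is_code_in n d \<A> C \<longleftrightarrow> C \<noteq> {} \<and> C \<subseteq> \<A> \<and> C \<subseteq> cube n \<and>
     (\<forall>x\<in>C. \<forall>y\<in>C. x \<noteq> y \<longrightarrow> d \<le> hdist x y)"

definition A_code :: "nat \<Rightarrow> nat \<Rightarrow> nat set set \<Rightarrow> nat" where
  "A_code n d \<A> = Max (card ` {C. is_code_in n d \<A> C})"

definition Del_feasible :: "nat \<Rightarrow> nat \<Rightarrow> (nat set \<Rightarrow> real) \<Rightarrow> bool" where
  "Del_feasible n d f \<longleftrightarrow>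
     (\<forall>x\<in>cube n. 0 \<le> f x) \<and>
     (\<forall>s\<in>cube n. 0 \<le> fourier n f s) \<and>
     (\<forall>x\<in>cube n. 1 \<le> weight x \<and> weight x \<le> d - 1 \<longrightarrow> f x = 0) \<and>
     f {} = 1"

definition OPT_Del :: "nat \<Rightarrow> nat \<Rightarrow> real" where
  "OPT_Del n d = Sup ((\<lambda>f. \<Sum>x\<in>cube n. f x) ` {f. Del_feasible n d f})"

definition DelA_feasible :: "nat \<Rightarrow> nat \<Rightarrow> nat set set \<Rightarrow> (nat set \<Rightarrow> real) \<Rightarrow> bool" where
  "DelA_feasible n d \<A> f \<longleftrightarrow>
     (\<forall>x\<in>cube n. 0 \<le> f x) \<and>
     (\<forall>s\<in>cube n. 0 \<le> fourier n f s) \<and>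
     (\<forall>x\<in>cube n. 1 \<le> weight x \<and> weight x \<le> d - 1 \<longrightarrow> f x = 0) \<and>
     f {} \<le> OPT_Del n d \<and>
     (\<forall>x\<in>cube n. f x \<le> 2 ^ n * conv n (indicator \<A>) (indicator \<A>) x)"

definition OPT_DelA :: "nat \<Rightarrow> nat \<Rightarrow> nat set set \<Rightarrow> real" where
  "OPT_DelA n d \<A> = Sup ((\<lambda>f. \<Sum>x\<in>cube n. f x) ` {f. DelA_feasible n d \<A> f})"

end

theory Submission
  imports Defs
begin

lemma finite_cube[simp]: "finite (cube n)" by (simp add: cube_def)

lemma vadd_cube: "x \<in> cube n \<Longrightarrow> y \<in> cube n \<Longrightarrow> vadd x y \<in> cube n"
  by (auto simp: cube_def vadd_def)

lemma vadd_comm: "vadd x y = vadd y x" by (auto simp: vadd_def)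

lemma vadd_eq_iff: "vadd c c' = x \<longleftrightarrow> c' = vadd c x"
  by (auto simp: vadd_def)

lemma vadd_empty: "vadd c c' = {} \<longleftrightarrow> c = c'"
  by (auto simp: vadd_def)

lemma card_symdiff:
  assumes "finite a" "finite b"
  shows "card ((a - b) \<union> (b - a)) + 2 * card (a \<inter> b) = card a + card b"
proof -
  have "card ((a - b) \<union> (b - a)) = card (a - b) + card (b - a)"
    by (rule card_Un_disjoint) (use assms in auto)
  moreover have "card (a - b) + card (a \<inter> b) = card a"
    using card_Int_Diff[of a b] assms by simp
  moreover have "card (b - a) + card (a \<inter> b) = card b"
    using card_Int_Diff[of b a] assms by (simp add: Int_commute)
  ultimately show ?thesis by linarith
qed

lemma char_mult:
  assumes "finite c" "finite c'"
  shows "((-1::real) ^ card (vadd c c' \<inter> s)) = (-1) ^ card (c \<inter> s) * (-1) ^ card (c' \<inter> s)"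
proof -
  let ?a = "c \<inter> s" and ?b = "c' \<inter> s"
  have e: "vadd c c' \<inter> s = (?a - ?b) \<union> (?b - ?a)" by (auto simp: vadd_def)
  have h: "card ((?a - ?b) \<union> (?b - ?a)) + 2 * card (?a \<inter> ?b) = card ?a + card ?b"
    using assms by (intro card_symdiff) auto
  have "((-1::real) ^ card ?a * (-1) ^ card ?b) = (-1) ^ (card ?a + card ?b)"
    by (simp add: power_add)
  also have "\<dots> = (-1) ^ card ((?a - ?b) \<union> (?b - ?a)) * ((-1)^2) ^ card (?a \<inter> ?b)"
    by (simp only: h[symmetric] power_add power_mult)
  also have "\<dots> = (-1) ^ card ((?a - ?b) \<union> (?b - ?a))" by simp
  finally show ?thesis using e by simp
qed

lemma orth:
  assumes "x \<in> cube n" "x \<noteq> {}"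
  shows "(\<Sum>s\<in>cube n. (-1::real) ^ card (x \<inter> s)) = 0"
proof -
  obtain i where i: "i \<in> x" using assms by auto
  have iin: "i < n" using assms i by (auto simp: cube_def)
  have fx: "finite x" using assms by (auto simp: cube_def finite_subset)
  define g where "g s = (if i \<in> s then s - {i} else insert i s)" for s
  have flip: "(-1::real) ^ card (x \<inter> g s) = - ((-1) ^ card (x \<inter> s))" for s
  proof (cases "i \<in> s")
    case True
    have "x \<inter> g s = (x \<inter> s) - {i}" using True by (auto simp: g_def)
    moreover have "card ((x \<inter> s) - {i}) = card (x \<inter> s) - 1" using fx i True by simp
    moreover have "x \<inter> s \<noteq> {}" using i True by auto
    then obtain m where "card (x \<inter> s) = Suc m" using fx
      by (metis card_0_eq finite_Int not0_implies_Suc)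
    ultimately show ?thesis by simp
  next
    case False
    have "x \<inter> g s = insert i (x \<inter> s)" using False i by (auto simp: g_def)
    moreover have "card (insert i (x \<inter> s)) = Suc (card (x \<inter> s))" using fx False by simp
    ultimately show ?thesis by simp
  qed
  have gg: "g (g s) = s" for s by (auto simp: g_def)
  let ?S = "\<Sum>s\<in>cube n. (-1::real) ^ card (x \<inter> s)"
  have "?S = (\<Sum>s\<in>cube n. (-1::real) ^ card (x \<inter> g s))"
    by (rule sum.reindex_bij_witness[of _ g g]) (auto simp: gg, auto simp: g_def cube_def iin)
  also have "\<dots> = - ?S" by (simp add: flip sum_negf)
  finally show ?thesis by simp
qed

lemma inversion0:
  "(\<Sum>s\<in>cube n. fourier n f s) = f {}"
proof -
  have "(\<Sum>s\<in>cube n. fourier n f s) = (1 / 2 ^ n) * (\<Sum>s\<in>cube n. \<Sum>x\<in>cube n. f x * (-1::real) ^ card (x \<inter> s))"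
    unfolding fourier_def by (simp only: sum_distrib_left)
  also have "(\<Sum>s\<in>cube n. \<Sum>x\<in>cube n. f x * (-1::real) ^ card (x \<inter> s))
      = (\<Sum>x\<in>cube n. \<Sum>s\<in>cube n. f x * (-1::real) ^ card (x \<inter> s))"
    by (rule sum.swap)
  also have "\<dots> = (\<Sum>x\<in>cube n. f x * (\<Sum>s\<in>cube n. (-1::real) ^ card (x \<inter> s)))"
    by (simp only: sum_distrib_left)
  also have "\<dots> = (\<Sum>x\<in>cube n. if x = {} then f {} * 2 ^ n else 0)"
  proof (rule sum.cong[OF refl])
    fix x assume x: "x \<in> cube n"
    show "f x * (\<Sum>s\<in>cube n. (-1::real) ^ card (x \<inter> s)) = (if x = {} then f {} * 2 ^ n else 0)"
    proof (cases "x = {}")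
      case True
      have c: "card (cube n) = 2 ^ n" by (simp add: cube_def card_Pow)
      have "(\<Sum>s\<in>cube n. (-1::real) ^ card (x \<inter> s)) = (\<Sum>s\<in>cube n. 1)"
        using True by simp
      also have "\<dots> = 2 ^ n" using c by simp
      finally show ?thesis using True by simp
    next
      case False
      then show ?thesis using orth[OF x False] by simp
    qed
  qed
  also have "\<dots> = f {} * 2 ^ n"
  proof -
    have "{} \<in> cube n" by (simp add: cube_def)
    then show ?thesis using sum.delta[of "cube n" "{}" "\<lambda>_. f {} * 2 ^ n"] by simp
  qed
  finally show ?thesis by simp
qed

lemma Del_bound:
  assumes "Del_feasible n d f"
  shows "(\<Sum>x\<in>cube n. f x) \<le> 2 ^ n"
proof -
  have nn: "\<forall>s\<in>cube n. 0 \<le> fourier n f s" and f0: "f {} = 1"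
    using assms by (auto simp: Del_feasible_def)
  have "{} \<in> cube n" by (simp add: cube_def)
  have "fourier n f {} \<le> (\<Sum>s\<in>cube n. fourier n f s)"
    by (rule member_le_sum) (use nn \<open>{} \<in> cube n\<close> in auto)
  also have "\<dots> = 1" using inversion0[of n f] f0 by simp
  finally have "fourier n f {} \<le> 1" .
  then show ?thesis by (simp add: fourier_def field_simps)
qed

lemma OPT_Del_ge:
  assumes "Del_feasible n d f"
  shows "(\<Sum>x\<in>cube n. f x) \<le> OPT_Del n d"
  unfolding OPT_Del_def
  by (rule cSup_upper) (use assms Del_bound in \<open>auto simp: bdd_above_def\<close>)

lemma OPT_DelA_ge:
  assumes "DelA_feasible n d \<A> f"
  shows "(\<Sum>x\<in>cube n. f x) \<le> OPT_DelA n d \<A>"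
  unfolding OPT_DelA_def
proof (rule cSup_upper)
  show "sum f (cube n) \<in> (\<lambda>f. sum f (cube n)) ` {f. DelA_feasible n d \<A> f}" using assms by auto
  let ?K = "\<Sum>x\<in>cube n. 2 ^ n * conv n (indicator \<A>) (indicator \<A>) x :: real"
  have "\<forall>g. DelA_feasible n d \<A> g \<longrightarrow> sum g (cube n) \<le> ?K"
    by (auto simp: DelA_feasible_def intro!: sum_mono)
  then show "bdd_above ((\<lambda>f. sum f (cube n)) ` {f. DelA_feasible n d \<A> f})"
    by (auto simp: bdd_above_def)
qed

theorem mainTheorem2:
  fixes n d :: nat and \<A> :: "nat set set"
  assumes "1 \<le> n" and "1 \<le> d" and "d \<le> n"
    and "\<A> \<subseteq> cube n" and "\<A> \<noteq> {}"
  shows "real (A_code n d \<A>) \<le> sqrt (OPT_DelA n d \<A>)"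
proof -
  let ?Cs = "{C. is_code_in n d \<A> C}"
  have fin: "finite ?Cs"
    by (rule finite_subset[of _ "Pow (cube n)"]) (auto simp: is_code_in_def)
  obtain a where a: "a \<in> \<A>" using assms by auto
  have "is_code_in n d \<A> {a}" using a assms by (auto simp: is_code_in_def)
  then have ne: "card ` ?Cs \<noteq> {}" by auto
  have "A_code n d \<A> \<in> card ` ?Cs" unfolding A_code_def
    using fin ne by (intro Max_in) auto
  then obtain C where C: "is_code_in n d \<A> C" and AC: "A_code n d \<A> = card C" by auto
  have CA: "C \<subseteq> \<A>" and Cc: "C \<subseteq> cube n" and Cne: "C \<noteq> {}"
    and Cd: "\<And>x y. x \<in> C \<Longrightarrow> y \<in> C \<Longrightarrow> x \<noteq> y \<Longrightarrow> d \<le> hdist x y"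
    using C by (auto simp: is_code_in_def)
  have finC: "finite C" using Cc finite_cube finite_subset by blast
  have fin_el: "\<And>c. c \<in> C \<Longrightarrow> finite c" using Cc by (auto simp: cube_def finite_subset)
  define M where "M = real (card C)"
  have Mpos: "M > 0" using finC Cne by (simp add: M_def card_gt_0_iff)
  define f where "f x = (\<Sum>c\<in>C. \<Sum>c'\<in>C. if vadd c c' = x then 1 else 0 :: real)" for x
  have sumf: "(\<Sum>x\<in>cube n. f x * g x) = (\<Sum>c\<in>C. \<Sum>c'\<in>C. g (vadd c c'))" for g
  proof -
    have "(\<Sum>x\<in>cube n. f x * g x) = (\<Sum>c\<in>C. \<Sum>c'\<in>C. \<Sum>x\<in>cube n. if vadd c c' = x then g x else 0)"
    proof -
      have "(\<Sum>x\<in>cube n. f x * g x) = (\<Sum>x\<in>cube n. \<Sum>c\<in>C. \<Sum>c'\<in>C. if vadd c c' = x then g x else 0)"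
        unfolding f_def sum_distrib_right by (intro sum.cong refl) simp
      also have "\<dots> = (\<Sum>c\<in>C. \<Sum>x\<in>cube n. \<Sum>c'\<in>C. if vadd c c' = x then g x else 0)"
        by (rule sum.swap)
      also have "\<dots> = (\<Sum>c\<in>C. \<Sum>c'\<in>C. \<Sum>x\<in>cube n. if vadd c c' = x then g x else 0)"
        by (intro sum.cong refl sum.swap)
      finally show ?thesis .
    qed
    also have "\<dots> = (\<Sum>c\<in>C. \<Sum>c'\<in>C. g (vadd c c'))"
      using Cc by (intro sum.cong refl) (auto simp: sum.delta intro!: vadd_cube)
    finally show ?thesis .
  qed
  have f_alt: "f x = (\<Sum>c\<in>C. indicator C (vadd c x))" for x
    unfolding f_def vadd_eq_iff by (intro sum.cong refl) (simp add: sum.delta finC indicator_def)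
  have f0: "f {} = M"
    unfolding f_def vadd_empty M_def by (simp add: sum.delta finC)
  have fnn: "f x \<ge> 0" for x unfolding f_def by (intro sum_nonneg) auto
  have ftot: "(\<Sum>x\<in>cube n. f x) = M * M"
    using sumf[of "\<lambda>_. 1"] by (simp add: M_def)
  have four: "fourier n f s = (1 / 2 ^ n) * (\<Sum>c\<in>C. (-1::real) ^ card (c \<inter> s))^2" for s
  proof -
    have "(\<Sum>x\<in>cube n. f x * (-1) ^ card (x \<inter> s)) = (\<Sum>c\<in>C. \<Sum>c'\<in>C. (-1::real) ^ card (vadd c c' \<inter> s))"
      by (rule sumf)
    also have "\<dots> = (\<Sum>c\<in>C. \<Sum>c'\<in>C. (-1::real) ^ card (c \<inter> s) * (-1) ^ card (c' \<inter> s))"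
      by (intro sum.cong refl char_mult) (auto intro: fin_el)
    also have "\<dots> = (\<Sum>c\<in>C. (-1::real) ^ card (c \<inter> s))^2"
      by (simp add: power2_eq_square sum_product)
    finally show ?thesis by (simp add: fourier_def)
  qed
  have fourier_nn: "0 \<le> fourier n f s" for s by (simp add: four)
  have fzero: "f x = 0" if "x \<in> cube n" "1 \<le> weight x" "weight x \<le> d - 1" for x
  proof -
    have "(if vadd c c' = x then 1 else 0 :: real) = 0" if "c \<in> C" "c' \<in> C" for c c'
    proof (cases "vadd c c' = x")
      case True
      with \<open>1 \<le> weight x\<close> have "x \<noteq> {}" by (auto simp: weight_def)
      then have "c \<noteq> c'" using True vadd_empty by auto
      then have "d \<le> hdist c c'" using Cd that by auto
      then show ?thesis using True \<open>weight x \<le> d - 1\<close> \<open>1 \<le> d\<close> by (simp add: hdist_def)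
    qed simp
    then show ?thesis unfolding f_def by simp
  qed
  have fourier_div: "fourier n (\<lambda>x. f x / M) s = fourier n f s / M" for s
    unfolding fourier_def by (simp add: sum_divide_distrib mult.commute)
  have "Del_feasible n d (\<lambda>x. f x / M)"
    unfolding Del_feasible_def using fnn fourier_nn fzero Mpos f0
    by (auto simp: fourier_div)
  from OPT_Del_ge[OF this] have "(\<Sum>x\<in>cube n. f x) / M \<le> OPT_Del n d"
    by (simp add: sum_divide_distrib)
  then have MO: "M \<le> OPT_Del n d" using ftot Mpos by simp
  have fconv: "f x \<le> 2 ^ n * conv n (indicator \<A>) (indicator \<A>) x" if "x \<in> cube n" for x
  proof -
    have "f x = (\<Sum>c\<in>C. indicator C (vadd c x))" by (rule f_alt)
    also have "\<dots> \<le> (\<Sum>c\<in>C. indicator \<A> c * indicator \<A> (vadd x c))"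
      using CA by (intro sum_mono) (auto simp: indicator_def vadd_comm)
    also have "\<dots> \<le> (\<Sum>c\<in>cube n. indicator \<A> c * indicator \<A> (vadd x c))"
      using Cc by (intro sum_mono2) (auto simp: indicator_def)
    finally show ?thesis by (simp add: conv_def)
  qed
  have "DelA_feasible n d \<A> f"
    unfolding DelA_feasible_def using fnn fourier_nn fzero f0 MO fconv by auto
  from OPT_DelA_ge[OF this] have "M * M \<le> OPT_DelA n d \<A>" using ftot by simp
  then have "sqrt (M * M) \<le> sqrt (OPT_DelA n d \<A>)" using real_sqrt_le_mono by blast
  moreover have "sqrt (M * M) = M" using Mpos by simp
  ultimately show ?thesis by (simp add: AC M_def)
qed

end
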